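(* Let $n\ge2$, $N\ge1$, $L>0$, $h=L/N$, $\Delta t>0$, and let $b_{ij}>0$ with $b_{ij}=b_{ji}$ for $i\neq j$, $i,j=1,\dots,n$. Let $\rho^k=(\rho^k_1,\dots,\rho^k_n)$ be cell-centered with $\rho^k_{i,\ell}>0$ for all $i,\ell$ and $\sum_{i=1}^n\rho^k_{i,\ell}=1$ for all $\ell$. Then there exists $\delta_0>0$ such that for every $0<\delta\le\delta_0$: an $n$-tuple $\rho^{k+1}$ of cell-centered grid functions with $\rho^{k+1}_{i,\ell}>0$ for all $i,\ell$ is a solution of the scheme (i.e. there is an $n$-tuple $v^{k+1}$ of edge-centered grid functions such that for all $i$ and $\ell$ $$\frac{\rho^{k+1}_{i,\ell}-\rho^k_{i,\ell}}{\Delta t}+\big(d_h(\hat\rho^k_iv^{k+1}_i)\big)_\ell=0,$$ $$-\sum_{j=1}^nb_{ij}\hat\rho^k_{j,\ell+\frac12}\big(v^{k+1}_{i,\ell+\frac12}-v^{k+1}_{j,\ell+\frac12}\big)=\big(D_h\log\rho^{k+1}_i\big)_{\ell+\frac12}-\frac{1}{\sum_{j=1}^n\hat\rho^k_{j,\ell+\frac12}}\sum_{j=1}^n\hat\rho^k_{j,\ell+\frac12}\big(D_h\log\rho^{k+1}_j\big)_{\ell+\frac12},$$ $$\sum_{j=1}^n\hat\rho^k_{j,\ell+\frac12}v^{k+1}_{j,\ell+\frac12}=0\,)$$ if and only if $\rho^{k+1}$ is the $\rho$-component of a minimizer $(\rho,w)$ over the set $K_\delta$ of the functional $$J(\rho,w)=\frac{1}{4\Delta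 t}\,h\sum_{\ell=1}^N\sum_{i,j=1}^nb_{ij}\hat\rho^k_{i,\ell+\frac12}\hat\rho^k_{j,\ell+\frac12}\big(w_{i,\ell+\frac12}-w_{j,\ell+\frac12}\big)^2+h\sum_{\ell=1}^N\sum_{i=1}^n\rho_{i,\ell}\log\rho_{i,\ell},$$ where $K_\delta$ is the set of pairs $(\rho,w)$, $\rho$ an $n$-tuple of cell-centered and $w$ an $n$-tuple of edge-centered grid functions, such that for all $i=1,\dots,n$ and $\ell=1,\dots,N$: $\rho_{i,\ell}\ge\delta$, $\rho_{i,\ell}-\rho^k_{i,\ell}+\big(d_h(\hat\rho^k_iw_i)\big)_\ell=0$, $\sum_{i=1}^n\hat\rho^k_{i,\ell+\frac12}w_{i,\ell+\frac12}=0$, and $\sum_{i=1}^n\rho_{i,\ell}=1$.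
   Context: Grid on the torus $[0,L]$ with $N$ intervals, $h=L/N$: cell-centered grid functions are $N$-periodic sequences $(f_\ell)_{\ell\in\mathbb Z}$ (values at $\ell h$); edge-centered ones are $N$-periodic sequences $(f_{\ell+\frac12})$ (values at $(\ell+\frac12)h$). For edge-centered $\phi$, $(d_h\phi)_\ell=(\phi_{\ell+\frac12}-\phi_{\ell-\frac12})/h$; for cell-centered $f$, $(D_hf)_{\ell+\frac12}=(f_{\ell+1}-f_\ell)/h$ and $\hat f_{\ell+\frac12}=(f_\ell+f_{\ell+1})/2$. Products and logarithms are pointwise; terms with $j=i$ vanish, so $b_{ii}$ plays no role. *)

theory Defs
  imports Complex_Main
begin

(* Grid functions on the torus are N-periodic functions int => real.
   Cell-centered f: f l is the value at l*h.
   Edge-centered phi: phi l is the value at (l+1/2)*h, i.e. phi l = phi_{l+1/2}. *)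

definition periodic_grid :: "nat \<Rightarrow> (int \<Rightarrow> real) \<Rightarrow> bool" where
  "periodic_grid N f \<longleftrightarrow> (\<forall>l. f (l + int N) = f l)"

definition d_h :: "real \<Rightarrow> (int \<Rightarrow> real) \<Rightarrow> int \<Rightarrow> real" where
  "d_h h phi l = (phi l - phi (l - 1)) / h"

definition D_h :: "real \<Rightarrow> (int \<Rightarrow> real) \<Rightarrow> int \<Rightarrow> real" where
  "D_h h f l = (f (l + 1) - f l) / h"

definition hat :: "(int \<Rightarrow> real) \<Rightarrow> int \<Rightarrow> real" where
  "hat f l = (f l + f (l + 1)) / 2"

definition scheme_solution ::
  "nat \<Rightarrow> nat \<Rightarrow> real \<Rightarrow> real \<Rightarrow> (nat \<Rightarrow> nat \<Rightarrow> real) \<Rightarrow>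
   (nat \<Rightarrow> int \<Rightarrow> real) \<Rightarrow> (nat \<Rightarrow> int \<Rightarrow> real) \<Rightarrow> bool" where
  "scheme_solution n N h dt b rk r \<longleftrightarrow>
    (\<exists>v :: nat \<Rightarrow> int \<Rightarrow> real.
      (\<forall>i\<in>{1..n}. periodic_grid N (v i)) \<and>
      (\<forall>i\<in>{1..n}. \<forall>l::int.
         (r i l - rk i l) / dt + d_h h (\<lambda>m. hat (rk i) m * v i m) l = 0 \<and>
         - (\<Sum>j\<in>{1..n}. b i j * hat (rk j) l * (v i l - v j l))
           = D_h h (\<lambda>m. ln (r i m)) l
             - (1 / (\<Sum>j\<in>{1..n}. hat (rk j) l))
               * (\<Sum>j\<in>{1..n}. hat (rk j) l * D_h h (\<lambda>m. ln (r j m)) l)) \<and>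
      (\<forall>l::int. (\<Sum>j\<in>{1..n}. hat (rk j) l * v j l) = 0))"

definition J_fun ::
  "nat \<Rightarrow> nat \<Rightarrow> real \<Rightarrow> real \<Rightarrow> (nat \<Rightarrow> nat \<Rightarrow> real) \<Rightarrow>
   (nat \<Rightarrow> int \<Rightarrow> real) \<Rightarrow> (nat \<Rightarrow> int \<Rightarrow> real) \<Rightarrow> (nat \<Rightarrow> int \<Rightarrow> real) \<Rightarrow> real" where
  "J_fun n N h dt b rk r w =
     1 / (4 * dt) * h * (\<Sum>l\<in>{1..int N}. \<Sum>i\<in>{1..n}. \<Sum>j\<in>{1..n}.
        b i j * hat (rk i) l * hat (rk j) l * (w i l - w j l)^2)
     + h * (\<Sum>l\<in>{1..int N}. \<Sum>i\<in>{1..n}. r i l * ln (r i l))"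

definition K_set ::
  "nat \<Rightarrow> nat \<Rightarrow> real \<Rightarrow> real \<Rightarrow> (nat \<Rightarrow> int \<Rightarrow> real) \<Rightarrow>
   ((nat \<Rightarrow> int \<Rightarrow> real) \<times> (nat \<Rightarrow> int \<Rightarrow> real)) set" where
  "K_set n N h \<delta> rk = {(r, w).
     (\<forall>i\<in>{1..n}. periodic_grid N (r i) \<and> periodic_grid N (w i)) \<and>
     (\<forall>i\<in>{1..n}. \<forall>l\<in>{1..int N}.
        r i l \<ge> \<delta> \<and> r i l - rk i l + d_h h (\<lambda>m. hat (rk i) m * w i m) l = 0) \<and>
     (\<forall>l\<in>{1..int N}. (\<Sum>i\<in>{1..n}. hat (rk i) l * w i l) = 0 \<and>
                      (\<Sum>i\<in>{1..n}. r i l) = 1)}"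

end

theory Submission
  imports Defs
begin


lemma per_nat: "periodic_grid N f \<Longrightarrow> f (l + int N * int k) = f l"
proof (induction k)
  case 0 then show ?case by simp
next
  case (Suc k)
  have "f (l + int N * int (Suc k)) = f ((l + int N * int k) + int N)"
    by (simp add: algebra_simps)
  also have "\<dots> = f (l + int N * int k)" using Suc.prems unfolding periodic_grid_def by blast
  finally show ?case using Suc by simp
qed

lemma per_int: assumes p: "periodic_grid N f" shows "f (l + int N * k) = f l"
proof (cases "k \<ge> 0")
  case True
  define m where "m = nat k"
  have "k = int m" using True m_def by simp
  then show ?thesis using per_nat p by simp
next
  case False
  define m where "m = nat (- k)"
  have m: "k = - int m" using False m_def by simp
  have "f l = f ((l + int N * k) + int N * int m)" using m by (simp add: algebra_simps)
  also have "\<dots> = f (l + int N * k)" using per_nat[OF p] by blast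
  finally show ?thesis by simp
qed

lemma per_eq: "periodic_grid N f \<Longrightarrow> x = y + int N * k \<Longrightarrow> f x = f y"
  using per_int by blast

lemma per_mod: "periodic_grid N f \<Longrightarrow> x mod int N = y mod int N \<Longrightarrow> f x = f y"
proof -
  assume p: "periodic_grid N f" and e: "x mod int N = y mod int N"
  have "x = y + int N * (x div int N - y div int N)"
  proof -
    have a: "int N * (x div int N) + x mod int N = x" by (rule mult_div_mod_eq)
    have b: "int N * (y div int N) + y mod int N = y" by (rule mult_div_mod_eq)
    show ?thesis unfolding right_diff_distrib using a b e by linarith
  qed
  then show ?thesis using per_eq[OF p] by blast
qed

lemma per_m1: "periodic_grid N f \<Longrightarrow> f (l + int N - 1) = f (l - 1)"
  by (rule per_eq[where k=1]) auto

lemma per_p1: "periodic_grid N f \<Longrightarrow> f (l + int N + 1) = f (l + 1)"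
  by (rule per_eq[where k=1]) auto

lemma hat_per: "periodic_grid N f \<Longrightarrow> periodic_grid N (hat f)"
proof -
  assume p: "periodic_grid N f"
  have "\<And>l. f (l + int N + 1) = f (l + 1)" by (rule per_p1[OF p])
  moreover have "\<And>l. f (l + int N) = f l" using p unfolding periodic_grid_def by blast
  ultimately show ?thesis unfolding periodic_grid_def hat_def by simp
qed

lemma per_mult: "periodic_grid N f \<Longrightarrow> periodic_grid N g \<Longrightarrow> periodic_grid N (\<lambda>m. f m * g m)"
  unfolding periodic_grid_def by simp

lemma per_add: "periodic_grid N f \<Longrightarrow> periodic_grid N g \<Longrightarrow> periodic_grid N (\<lambda>m. f m + g m)"
  unfolding periodic_grid_def by simp

lemma per_diff: "periodic_grid N f \<Longrightarrow> periodic_grid N g \<Longrightarrow> periodic_grid N (\<lambda>m. f m - g m)"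
  unfolding periodic_grid_def by simp

lemma per_cmult: "periodic_grid N f \<Longrightarrow> periodic_grid N (\<lambda>m. c * f m)"
  unfolding periodic_grid_def by simp

lemma per_divide: "periodic_grid N f \<Longrightarrow> periodic_grid N g \<Longrightarrow> periodic_grid N (\<lambda>m. f m / g m)"
  unfolding periodic_grid_def by simp

lemma per_comp: "periodic_grid N f \<Longrightarrow> periodic_grid N (\<lambda>m. F (f m))"
  unfolding periodic_grid_def by simp

lemma per_d_h: "periodic_grid N f \<Longrightarrow> periodic_grid N (d_h h f)"
proof -
  assume p: "periodic_grid N f"
  have "\<And>l. f (l + int N - 1) = f (l - 1)" by (rule per_m1[OF p])
  moreover have "\<And>l. f (l + int N) = f l" using p unfolding periodic_grid_def by blast
  ultimately show ?thesis unfolding periodic_grid_def d_h_def by simp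
qed

lemma per_D_h: "periodic_grid N f \<Longrightarrow> periodic_grid N (D_h h f)"
proof -
  assume p: "periodic_grid N f"
  have "\<And>l. f (l + int N + 1) = f (l + 1)" by (rule per_p1[OF p])
  moreover have "\<And>l. f (l + int N) = f l" using p unfolding periodic_grid_def by blast
  ultimately show ?thesis unfolding periodic_grid_def D_h_def by simp
qed

lemma telescope: fixes F :: "int \<Rightarrow> real" shows "(\<Sum>l\<in>{1..int N}. F l - F (l - 1)) = F (int N) - F 0"
proof (induction N)
  case 0 then show ?case by auto
next
  case (Suc N)
  have "{1..int (Suc N)} = insert (int N + 1) {1..int N}" by auto
  then show ?case using Suc by (simp add: add.commute)
qed

lemma sum_by_parts:
  assumes "periodic_grid N G" "periodic_grid N phi"
  shows "(\<Sum>l\<in>{1..int N}. G l * (phi l - phi (l - 1))) = - (\<Sum>l\<in>{1..int N}. phi l * (G (l + 1) - G l))"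
proof -
  let ?F = "\<lambda>l. G (l + 1) * phi l"
  have "(\<Sum>l\<in>{1..int N}. G l * (phi l - phi (l - 1))) + (\<Sum>l\<in>{1..int N}. phi l * (G (l + 1) - G l))
      = (\<Sum>l\<in>{1..int N}. ?F l - ?F (l - 1))"
    unfolding sum.distrib[symmetric] by (rule sum.cong) (simp_all add: algebra_simps)
  also have "\<dots> = ?F (int N) - ?F 0" by (rule telescope)
  also have "\<dots> = 0" using per_eq[OF assms(1), of "int N + 1" 1 1] per_eq[OF assms(2), of "int N" 0 1] by simp
  finally show ?thesis by linarith
qed


lemma Qpt:
  fixes H W D :: "nat \<Rightarrow> real" and b :: "nat \<Rightarrow> nat \<Rightarrow> real"
  assumes sym: "\<forall>i\<in>A. \<forall>j\<in>A. i \<noteq> j \<longrightarrow> b i j = b j i"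
  shows "(\<Sum>i\<in>A. \<Sum>j\<in>A. b i j * H i * H j * (2 * (W i - W j) * (D i - D j)))
       = 4 * (\<Sum>i\<in>A. H i * D i * (\<Sum>j\<in>A. b i j * H j * (W i - W j)))"
proof -
  let ?g = "\<lambda>i j. b i j * H i * H j * (W i - W j)"
  have s1: "(\<Sum>i\<in>A. \<Sum>j\<in>A. ?g i j * D j) = (\<Sum>j\<in>A. \<Sum>i\<in>A. ?g i j * D j)"
    by (rule sum.swap)
  also have "\<dots> = - (\<Sum>j\<in>A. \<Sum>i\<in>A. ?g j i * D j)"
    unfolding sum_negf[symmetric]
  proof (rule sum.cong[OF refl], rule sum.cong[OF refl])
    fix j i assume "j \<in> A" "i \<in> A"
    then show "?g i j * D j = - (?g j i * D j)"
      using sym by (cases "i = j") (auto simp: algebra_simps)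
  qed
  finally have s2: "(\<Sum>i\<in>A. \<Sum>j\<in>A. ?g i j * D j) = - (\<Sum>i\<in>A. \<Sum>j\<in>A. ?g i j * D i)" .
  have "(\<Sum>i\<in>A. \<Sum>j\<in>A. b i j * H i * H j * (2 * (W i - W j) * (D i - D j)))
      = (\<Sum>i\<in>A. \<Sum>j\<in>A. 2 * (?g i j * D i) - 2 * (?g i j * D j))"
    by (rule sum.cong[OF refl], rule sum.cong[OF refl]) (simp add: algebra_simps)
  also have "\<dots> = 2 * (\<Sum>i\<in>A. \<Sum>j\<in>A. ?g i j * D i) - 2 * (\<Sum>i\<in>A. \<Sum>j\<in>A. ?g i j * D j)"
    by (simp add: sum_subtractf sum_distrib_left)
  also have "\<dots> = 4 * (\<Sum>i\<in>A. \<Sum>j\<in>A. ?g i j * D i)" using s2 by simp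
  also have "(\<Sum>i\<in>A. \<Sum>j\<in>A. ?g i j * D i) = (\<Sum>i\<in>A. H i * D i * (\<Sum>j\<in>A. b i j * H j * (W i - W j)))"
    by (rule sum.cong[OF refl]) (simp add: sum_distrib_left algebra_simps)
  finally show ?thesis .
qed

lemma FV:
  fixes h dt :: real and n N :: nat and b :: "nat \<Rightarrow> nat \<Rightarrow> real"
    and rk r w d rho :: "nat \<Rightarrow> int \<Rightarrow> real"
  assumes h: "h > 0"
    and sym: "\<forall>i\<in>{1..n}. \<forall>j\<in>{1..n}. i \<noteq> j \<longrightarrow> b i j = b j i"
    and perphi: "\<forall>j\<in>{1..n}. periodic_grid N (\<lambda>m. hat (rk j) m * d j m)"
    and perr: "\<forall>j\<in>{1..n}. periodic_grid N (r j)"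
    and rho: "\<forall>j\<in>{1..n}. \<forall>l\<in>{1..int N}. rho j l = - d_h h (\<lambda>m. hat (rk j) m * d j m) l"
  shows "1 / (4 * dt) * h * (\<Sum>l\<in>{1..int N}. \<Sum>i\<in>{1..n}. \<Sum>j\<in>{1..n}.
            b i j * hat (rk i) l * hat (rk j) l * (2 * (w i l - w j l) * (d i l - d j l)))
         + h * (\<Sum>l\<in>{1..int N}. \<Sum>i\<in>{1..n}. (ln (r i l) + 1) * rho i l)
       = h * (\<Sum>l\<in>{1..int N}. \<Sum>i\<in>{1..n}. hat (rk i) l * d i l *
            (D_h h (\<lambda>m. ln (r i m)) l + 1 / dt * (\<Sum>j\<in>{1..n}. b i j * hat (rk j) l * (w i l - w j l))))"
proof -
  have Q: "1 / (4 * dt) * h * (\<Sum>l\<in>{1..int N}. \<Sum>i\<in>{1..n}. \<Sum>j\<in>{1..n}.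
            b i j * hat (rk i) l * hat (rk j) l * (2 * (w i l - w j l) * (d i l - d j l)))
        = h * (\<Sum>l\<in>{1..int N}. \<Sum>i\<in>{1..n}. hat (rk i) l * d i l *
            (1 / dt * (\<Sum>j\<in>{1..n}. b i j * hat (rk j) l * (w i l - w j l))))"
  proof -
    have "\<And>l. (\<Sum>i\<in>{1..n}. \<Sum>j\<in>{1..n}.
            b i j * hat (rk i) l * hat (rk j) l * (2 * (w i l - w j l) * (d i l - d j l)))
          = 4 * (\<Sum>i\<in>{1..n}. hat (rk i) l * d i l * (\<Sum>j\<in>{1..n}. b i j * hat (rk j) l * (w i l - w j l)))"
      by (rule Qpt[OF sym])
    then show ?thesis
      by (simp add: sum_distrib_left sum_distrib_right algebra_simps)
  qed
  have E: "(\<Sum>l\<in>{1..int N}. \<Sum>i\<in>{1..n}. (ln (r i l) + 1) * rho i l)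
      = (\<Sum>l\<in>{1..int N}. \<Sum>i\<in>{1..n}. hat (rk i) l * d i l * D_h h (\<lambda>m. ln (r i m)) l)"
  proof -
    have "(\<Sum>l\<in>{1..int N}. \<Sum>i\<in>{1..n}. (ln (r i l) + 1) * rho i l)
        = (\<Sum>i\<in>{1..n}. \<Sum>l\<in>{1..int N}. (ln (r i l) + 1) * rho i l)" by (rule sum.swap)
    also have "\<dots> = (\<Sum>i\<in>{1..n}. \<Sum>l\<in>{1..int N}. hat (rk i) l * d i l * D_h h (\<lambda>m. ln (r i m)) l)"
    proof (rule sum.cong[OF refl])
      fix i assume i: "i \<in> {1..n}"
      let ?G = "\<lambda>l. ln (r i l) + 1" and ?p = "\<lambda>m. hat (rk i) m * d i m"
      have pG: "periodic_grid N ?G" using perr i unfolding periodic_grid_def by simp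
      have "(\<Sum>l\<in>{1..int N}. (ln (r i l) + 1) * rho i l)
          = (\<Sum>l\<in>{1..int N}. ?G l * (?p l - ?p (l - 1)) * (- 1 / h))"
        by (rule sum.cong[OF refl]) (use rho i in \<open>simp add: d_h_def\<close>)
      also have "\<dots> = (\<Sum>l\<in>{1..int N}. ?G l * (?p l - ?p (l - 1))) * (- 1 / h)"
        by (simp add: sum_distrib_right sum_negf sum_divide_distrib)
      also have "\<dots> = (\<Sum>l\<in>{1..int N}. ?p l * (?G (l + 1) - ?G l)) / h"
        using sum_by_parts[OF pG perphi[rule_format, OF i]] by simp
      also have "\<dots> = (\<Sum>l\<in>{1..int N}. ?p l * (?G (l + 1) - ?G l) / h)"
        by (simp add: sum_divide_distrib)
      also have "\<dots> = (\<Sum>l\<in>{1..int N}. hat (rk i) l * d i l * D_h h (\<lambda>m. ln (r i m)) l)"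
        by (rule sum.cong[OF refl]) (simp add: D_h_def)
      finally show "(\<Sum>l\<in>{1..int N}. (ln (r i l) + 1) * rho i l)
          = (\<Sum>l\<in>{1..int N}. hat (rk i) l * d i l * D_h h (\<lambda>m. ln (r i m)) l)" .
    qed
    also have "\<dots> = (\<Sum>l\<in>{1..int N}. \<Sum>i\<in>{1..n}. hat (rk i) l * d i l * D_h h (\<lambda>m. ln (r i m)) l)"
      by (rule sum.swap)
    finally show ?thesis .
  qed
  have R: "h * (\<Sum>l\<in>{1..int N}. \<Sum>i\<in>{1..n}. hat (rk i) l * d i l *
            (D_h h (\<lambda>m. ln (r i m)) l + 1 / dt * (\<Sum>j\<in>{1..n}. b i j * hat (rk j) l * (w i l - w j l))))
     = h * (\<Sum>l\<in>{1..int N}. \<Sum>i\<in>{1..n}. hat (rk i) l * d i l * D_h h (\<lambda>m. ln (r i m)) l)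
     + h * (\<Sum>l\<in>{1..int N}. \<Sum>i\<in>{1..n}. hat (rk i) l * d i l *
            (1 / dt * (\<Sum>j\<in>{1..n}. b i j * hat (rk j) l * (w i l - w j l))))"
    by (simp only: distrib_left sum.distrib)
  show ?thesis unfolding Q E R by simp
qed


lemma xlnx_tangent:
  fixes x y :: real assumes "0 < x" "0 < y"
  shows "y * ln y - x * ln x \<le> (ln y + 1) * (y - x)"
proof -
  have "ln (y / x) \<le> y / x - 1" using assms by (intro ln_le_minus_one) simp
  then have "ln y - ln x \<le> y / x - 1" using assms by (simp add: ln_div)
  then have "x * (ln y - ln x) \<le> x * (y / x - 1)" using assms by (intro mult_left_mono) auto
  then have "x * ln y - x * ln x \<le> y - x" using assms by (simp add: algebra_simps)
  then show ?thesis by (simp add: algebra_simps)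
qed

lemma term_bd:
  fixes x k a m :: real
  assumes "0 < x" "x \<le> 1" "m \<le> k" "k \<le> 1" "0 < m" "0 \<le> a" "a \<le> 1"
  shows "ln ((1 - a) * x + a * k) * (k - x) \<le> - ln m"
proof -
  let ?y = "(1 - a) * x + a * k"
  have ypos: "?y > 0"
  proof -
    have "(1 - a) * x \<ge> 0" using assms by simp
    moreover have "a * k \<ge> 0" using assms by simp
    moreover have "(1 - a) * x > 0 \<or> a * k > 0" using assms by (cases "a = 1") auto
    ultimately show ?thesis by linarith
  qed
  have yle: "?y \<le> 1"
  proof -
    have "(1 - a) * x \<le> (1 - a) * 1" using assms by (intro mult_left_mono) auto
    moreover have "a * k \<le> a * 1" using assms by (intro mult_left_mono) auto
    ultimately show ?thesis by simp
  qed
  have lny: "ln ?y \<le> 0" using ypos yle by simp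
  have lnm: "ln m \<le> 0" using assms by simp
  show ?thesis
  proof (cases "x \<le> k")
    case True
    then have "ln ?y * (k - x) \<le> 0" using lny by (simp add: mult_nonpos_nonneg)
    then show ?thesis using lnm by linarith
  next
    case False
    have "(1 - a) * k \<le> (1 - a) * x" using False assms by (intro mult_left_mono) auto
    then have "?y \<ge> k" by (simp add: algebra_simps)
    then have "ln ?y \<ge> ln m" using assms ypos by simp
    then have "- ln ?y \<le> - ln m" by simp
    have "ln ?y * (k - x) = (- ln ?y) * (x - k)" by (simp add: algebra_simps)
    also have "\<dots> \<le> (- ln m) * (x - k)"
      using \<open>- ln ?y \<le> - ln m\<close> False by (intro mult_right_mono) auto
    also have "\<dots> \<le> (- ln m) * 1" using lnm assms False by (intro mult_left_mono) auto
    finally show ?thesis by simp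
  qed
qed

lemma term_bd0:
  fixes k a m :: real
  assumes "0 < a" "a \<le> m / 2" "a \<le> 1/4" "m \<le> k" "k \<le> 1"
  shows "ln ((1 - a) * a + a * k) * (k - a) \<le> m / 2 * ln (2 * a)"
proof -
  let ?y = "(1 - a) * a + a * k"
  have ypos: "?y > 0" using assms by (simp add: add_pos_pos)
  have "?y \<le> a + a" using assms by (simp add: algebra_simps) (smt (verit) mult_left_le mult_nonneg_nonneg)
  then have "ln ?y \<le> ln (2 * a)" using ypos by simp
  moreover have "ln (2 * a) < 0" using assms by simp
  moreover have "k - a \<ge> m / 2" using assms by simp
  ultimately have "ln ?y * (k - a) \<le> ln (2 * a) * (k - a)" using assms by (intro mult_right_mono) auto
  also have "\<dots> \<le> ln (2 * a) * (m / 2)" using \<open>ln (2 * a) < 0\<close> \<open>k - a \<ge> m / 2\<close>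
    by (intro mult_left_mono_neg) auto
  finally show ?thesis by (simp add: mult.commute)
qed


definition Qs :: "nat \<Rightarrow> nat \<Rightarrow> (nat \<Rightarrow> nat \<Rightarrow> real) \<Rightarrow> (nat \<Rightarrow> int \<Rightarrow> real) \<Rightarrow> (nat \<Rightarrow> int \<Rightarrow> real) \<Rightarrow> real" where
  "Qs n N b rk w = (\<Sum>l\<in>{1..int N}. \<Sum>i\<in>{1..n}. \<Sum>j\<in>{1..n}.
        b i j * hat (rk i) l * hat (rk j) l * (w i l - w j l)^2)"

definition Es :: "nat \<Rightarrow> nat \<Rightarrow> (nat \<Rightarrow> int \<Rightarrow> real) \<Rightarrow> real" where
  "Es n N r = (\<Sum>l\<in>{1..int N}. \<Sum>i\<in>{1..n}. r i l * ln (r i l))"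

lemma J_split: "J_fun n N h dt b rk r w = 1 / (4 * dt) * h * Qs n N b rk w + h * Es n N r"
  by (simp add: J_fun_def Qs_def Es_def)

lemma hat_pos: "\<forall>l. f l > 0 \<Longrightarrow> hat f l > 0"
  by (simp add: hat_def add_pos_pos)

lemma Qs_nonneg:
  assumes bpos: "\<forall>i\<in>{1..n}. \<forall>j\<in>{1..n}. i \<noteq> j \<longrightarrow> b i j > 0"
    and rkpos: "\<forall>i\<in>{1..n}. \<forall>l. rk i l > 0"
  shows "Qs n N b rk w \<ge> 0"
  unfolding Qs_def
proof (intro sum_nonneg)
  fix l i j assume i: "i \<in> {1..n}" and j: "j \<in> {1..n}"
  show "0 \<le> b i j * hat (rk i) l * hat (rk j) l * (w i l - w j l)\<^sup>2"
  proof (cases "i = j")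
    case True then show ?thesis by simp
  next
    case False
    then have "b i j > 0" using bpos i j by blast
    moreover have "hat (rk i) l > 0" "hat (rk j) l > 0" using rkpos i j hat_pos by auto
    ultimately show ?thesis by simp
  qed
qed

lemma Qs_scale: "Qs n N b rk (\<lambda>i l. c * w i l) = c^2 * Qs n N b rk w"
  unfolding Qs_def sum_distrib_left
  by (intro sum.cong refl) (simp add: power2_eq_square algebra_simps)

lemma core_J:
  fixes a m :: real
  assumes dt: "dt > 0" and h: "h > 0"
    and bpos: "\<forall>i\<in>{1..n}. \<forall>j\<in>{1..n}. i \<noteq> j \<longrightarrow> b i j > 0"
    and rkpos: "\<forall>i\<in>{1..n}. \<forall>l. rk i l > 0"
    and rkle: "\<forall>i\<in>{1..n}. \<forall>l. rk i l \<le> 1"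
    and rksum: "\<forall>l. (\<Sum>i\<in>{1..n}. rk i l) = 1"
    and m: "0 < m" "m \<le> 1" "\<forall>i\<in>{1..n}. \<forall>l\<in>{1..int N}. m \<le> rk i l"
    and rpos: "\<forall>i\<in>{1..n}. \<forall>l\<in>{1..int N}. r i l > 0"
    and rle: "\<forall>i\<in>{1..n}. \<forall>l\<in>{1..int N}. r i l \<le> 1"
    and rsum: "\<forall>l\<in>{1..int N}. (\<Sum>i\<in>{1..n}. r i l) = 1"
    and i0: "i0 \<in> {1..n}" and l0: "l0 \<in> {1..int N}" and a: "a = r i0 l0"
    and am: "a \<le> m / 2" and a4: "a \<le> 1/4"
    and small: "m / 2 * ln (2 * a) + real n * real N * (- ln m) < 0"
  shows "J_fun n N h dt b rk (\<lambda>i l. (1 - a) * r i l + a * rk i l) (\<lambda>i l. (1 - a) * w i l)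
         < J_fun n N h dt b rk r w"
proof -
  have apos: "a > 0" using rpos i0 l0 a by auto
  let ?y = "\<lambda>i l. (1 - a) * r i l + a * rk i l"
  have Q: "Qs n N b rk (\<lambda>i l. (1 - a) * w i l) \<le> Qs n N b rk w"
  proof -
    have "Qs n N b rk (\<lambda>i l. (1 - a) * w i l) = (1 - a)^2 * Qs n N b rk w" by (rule Qs_scale)
    also have "\<dots> \<le> 1 * Qs n N b rk w"
      using Qs_nonneg[OF bpos rkpos] apos a4 by (intro mult_right_mono) (auto simp: power_le_one)
    finally show ?thesis by simp
  qed
  have ypos: "\<And>i l. i \<in> {1..n} \<Longrightarrow> l \<in> {1..int N} \<Longrightarrow> ?y i l > 0"
  proof -
    fix i l assume "i \<in> {1..n}" "l \<in> {1..int N}"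
    then have "r i l > 0" "rk i l > 0" using rpos rkpos by auto
    then show "?y i l > 0" using apos a4 by (simp add: add_pos_pos)
  qed
  have E1: "Es n N ?y - Es n N r \<le> (\<Sum>l\<in>{1..int N}. \<Sum>i\<in>{1..n}. (ln (?y i l) + 1) * (?y i l - r i l))"
    unfolding Es_def sum_subtractf[symmetric]
    by (intro sum_mono xlnx_tangent) (use rpos ypos in auto)
  also have "\<dots> = a * (\<Sum>l\<in>{1..int N}. \<Sum>i\<in>{1..n}. ln (?y i l) * (rk i l - r i l))
       + a * (\<Sum>l\<in>{1..int N}. (\<Sum>i\<in>{1..n}. rk i l) - (\<Sum>i\<in>{1..n}. r i l))"
    by (simp add: sum_distrib_left sum_subtractf[symmetric] sum.distrib[symmetric] algebra_simps)
  also have "(\<Sum>l\<in>{1..int N}. (\<Sum>i\<in>{1..n}. rk i l) - (\<Sum>i\<in>{1..n}. r i l)) = 0"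
    using rksum rsum by simp
  also have "(\<Sum>l\<in>{1..int N}. \<Sum>i\<in>{1..n}. ln (?y i l) * (rk i l - r i l))
      \<le> (\<Sum>l\<in>{1..int N}. \<Sum>i\<in>{1..n}. (- ln m) + (if l = l0 then (if i = i0 then m / 2 * ln (2 * a) else 0) else 0))"
  proof (intro sum_mono)
    fix l i assume l: "l \<in> {1..int N}" and i: "i \<in> {1..n}"
    show "ln (?y i l) * (rk i l - r i l) \<le> (- ln m) + (if l = l0 then (if i = i0 then m / 2 * ln (2 * a) else 0) else 0)"
    proof (cases "l = l0 \<and> i = i0")
      case True
      have "ln (?y i l) * (rk i l - r i l) \<le> m / 2 * ln (2 * a)"
        using True term_bd0[OF apos am a4, of "rk i l"] m rkle i l a by auto
      moreover have "- ln m \<ge> 0" using m by simp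
      ultimately show ?thesis using True by simp
    next
      case False
      have "ln (?y i l) * (rk i l - r i l) \<le> - ln m"
        using term_bd[of "r i l" m "rk i l" a] rpos rle m rkle i l apos a4 by auto
      then show ?thesis using False by auto
    qed
  qed
  also have "(\<Sum>l\<in>{1..int N}. \<Sum>i\<in>{1..n}. (- ln m) + (if l = l0 then (if i = i0 then m / 2 * ln (2 * a) else 0) else 0))
      = real N * real n * (- ln m) + m / 2 * ln (2 * a)"
  proof -
    have "\<And>l. (\<Sum>i\<in>{1..n}. (- ln m) + (if l = l0 then (if i = i0 then m / 2 * ln (2 * a) else 0) else 0))
         = real n * (- ln m) + (if l = l0 then m / 2 * ln (2 * a) else 0)"
    proof -
      fix l
      have "(\<Sum>i\<in>{1..n}. (if l = l0 then (if i = i0 then m / 2 * ln (2 * a) else 0) else 0))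
          = (if l = l0 then m / 2 * ln (2 * a) else 0)" using i0 by simp
      then show "(\<Sum>i\<in>{1..n}. (- ln m) + (if l = l0 then (if i = i0 then m / 2 * ln (2 * a) else 0) else 0))
         = real n * (- ln m) + (if l = l0 then m / 2 * ln (2 * a) else 0)"
        by (simp only: sum.distrib) simp
    qed
    then have "(\<Sum>l\<in>{1..int N}. \<Sum>i\<in>{1..n}. (- ln m) + (if l = l0 then (if i = i0 then m / 2 * ln (2 * a) else 0) else 0))
       = (\<Sum>l\<in>{1..int N}. real n * (- ln m) + (if l = l0 then m / 2 * ln (2 * a) else 0))" by simp
    also have "\<dots> = real N * (real n * (- ln m)) + m / 2 * ln (2 * a)"
      using l0 by (simp only: sum.distrib) simp
    finally show ?thesis by simp
  qed
  finally have E: "Es n N ?y - Es n N r \<le> a * (real N * real n * (- ln m) + m / 2 * ln (2 * a))"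
    using apos by (simp add: mult_left_mono)
  have neg: "a * (real N * real n * (- ln m) + m / 2 * ln (2 * a)) < 0"
    using small apos by (simp add: mult_pos_neg algebra_simps)
  have "h * Es n N ?y < h * Es n N r" using E neg h by (simp add: algebra_simps)
  moreover have "1 / (4 * dt) * h * Qs n N b rk (\<lambda>i l. (1 - a) * w i l) \<le> 1 / (4 * dt) * h * Qs n N b rk w"
    using Q dt h by (intro mult_left_mono) auto
  ultimately show ?thesis unfolding J_split by linarith
qed


lemma d_h_scale: "d_h h (\<lambda>m. c * f m) l = c * d_h h f l"
  by (cases "h = 0") (simp_all add: d_h_def field_simps)

lemma d_h_diff: "d_h h (\<lambda>m. f m - g m) l = d_h h f l - d_h h g l"
  by (cases "h = 0") (simp_all add: d_h_def field_simps)

lemma d_h_add: "d_h h (\<lambda>m. f m + g m) l = d_h h f l + d_h h g l"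
  by (cases "h = 0") (simp_all add: d_h_def field_simps)

definition feas :: "nat \<Rightarrow> nat \<Rightarrow> real \<Rightarrow> (nat \<Rightarrow> int \<Rightarrow> real) \<Rightarrow> (nat \<Rightarrow> int \<Rightarrow> real) \<Rightarrow> (nat \<Rightarrow> int \<Rightarrow> real) \<Rightarrow> bool" where
  "feas n N h rk r w \<longleftrightarrow>
     (\<forall>i\<in>{1..n}. periodic_grid N (r i) \<and> periodic_grid N (w i)) \<and>
     (\<forall>i\<in>{1..n}. \<forall>l\<in>{1..int N}. r i l - rk i l + d_h h (\<lambda>m. hat (rk i) m * w i m) l = 0) \<and>
     (\<forall>l\<in>{1..int N}. (\<Sum>i\<in>{1..n}. hat (rk i) l * w i l) = 0 \<and> (\<Sum>i\<in>{1..n}. r i l) = 1)"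

lemma K_iff: "(r, w) \<in> K_set n N h \<delta> rk \<longleftrightarrow> feas n N h rk r w \<and> (\<forall>i\<in>{1..n}. \<forall>l\<in>{1..int N}. r i l \<ge> \<delta>)"
  unfolding K_set_def feas_def by auto

lemma core_feas:
  assumes rkper: "\<forall>i\<in>{1..n}. periodic_grid N (rk i)"
    and rksum: "\<forall>l. (\<Sum>i\<in>{1..n}. rk i l) = 1"
    and f: "feas n N h rk r w"
  shows "feas n N h rk (\<lambda>i l. (1 - a) * r i l + a * rk i l) (\<lambda>i l. (1 - a) * w i l)"
proof -
  have per: "\<forall>i\<in>{1..n}. periodic_grid N (\<lambda>l. (1 - a) * r i l + a * rk i l) \<and> periodic_grid N (\<lambda>l. (1 - a) * w i l)"
    using f rkper unfolding feas_def periodic_grid_def by simp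
  have mass: "\<forall>i\<in>{1..n}. \<forall>l\<in>{1..int N}. (1 - a) * r i l + a * rk i l - rk i l
      + d_h h (\<lambda>m. hat (rk i) m * ((1 - a) * w i m)) l = 0"
  proof (intro ballI)
    fix i l assume i: "i \<in> {1..n}" and l: "l \<in> {1..int N}"
    have e: "r i l - rk i l + d_h h (\<lambda>m. hat (rk i) m * w i m) l = 0" using f i l unfolding feas_def by blast
    have "(\<lambda>m. hat (rk i) m * ((1 - a) * w i m)) = (\<lambda>m. (1 - a) * (hat (rk i) m * w i m))"
      by (simp add: algebra_simps)
    then have "(1 - a) * r i l + a * rk i l - rk i l + d_h h (\<lambda>m. hat (rk i) m * ((1 - a) * w i m)) l
        = (1 - a) * (r i l - rk i l + d_h h (\<lambda>m. hat (rk i) m * w i m) l)"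
      unfolding d_h_scale by (simp only: d_h_scale) (simp add: algebra_simps)
    then show "(1 - a) * r i l + a * rk i l - rk i l + d_h h (\<lambda>m. hat (rk i) m * ((1 - a) * w i m)) l = 0"
      using e by simp
  qed
  have sums: "\<forall>l\<in>{1..int N}. (\<Sum>i\<in>{1..n}. hat (rk i) l * ((1 - a) * w i l)) = 0
       \<and> (\<Sum>i\<in>{1..n}. (1 - a) * r i l + a * rk i l) = 1"
  proof
    fix l assume l: "l \<in> {1..int N}"
    have "(\<Sum>i\<in>{1..n}. hat (rk i) l * ((1 - a) * w i l)) = (1 - a) * (\<Sum>i\<in>{1..n}. hat (rk i) l * w i l)"
      by (simp add: sum_distrib_left algebra_simps)
    moreover have "(\<Sum>i\<in>{1..n}. (1 - a) * r i l + a * rk i l) = (1 - a) * (\<Sum>i\<in>{1..n}. r i l) + a * (\<Sum>i\<in>{1..n}. rk i l)"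
      by (simp add: sum.distrib sum_distrib_left)
    ultimately show "(\<Sum>i\<in>{1..n}. hat (rk i) l * ((1 - a) * w i l)) = 0
       \<and> (\<Sum>i\<in>{1..n}. (1 - a) * r i l + a * rk i l) = 1"
      using f l rksum unfolding feas_def by simp
  qed
  show ?thesis unfolding feas_def using per mass sums by blast
qed




lemma grad_ineq:
  assumes h: "h > 0" and dt: "dt > 0"
    and bpos: "\<forall>i\<in>{1..n}. \<forall>j\<in>{1..n}. i \<noteq> j \<longrightarrow> b i j > 0 \<and> b i j = b j i"
    and rkpos: "\<forall>i\<in>{1..n}. \<forall>l. rk i l > 0"
    and rkper: "\<forall>i\<in>{1..n}. periodic_grid N (rk i)"
    and f: "feas n N h rk r w" and f': "feas n N h rk r' w'"
    and rpos: "\<forall>i\<in>{1..n}. \<forall>l\<in>{1..int N}. r i l > 0"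
    and rpos': "\<forall>i\<in>{1..n}. \<forall>l\<in>{1..int N}. r' i l > 0"
    and g: "\<forall>i\<in>{1..n}. \<forall>l\<in>{1..int N}.
        D_h h (\<lambda>m. ln (r i m)) l + 1 / dt * (\<Sum>j\<in>{1..n}. b i j * hat (rk j) l * (w i l - w j l)) = S l"
  shows "J_fun n N h dt b rk r w \<le> J_fun n N h dt b rk r' w'"
proof -
  let ?d = "\<lambda>i l. w' i l - w i l" and ?rho = "\<lambda>i l. r' i l - r i l"
  have sym: "\<forall>i\<in>{1..n}. \<forall>j\<in>{1..n}. i \<noteq> j \<longrightarrow> b i j = b j i" using bpos by blast
  have perphi: "\<forall>j\<in>{1..n}. periodic_grid N (\<lambda>m. hat (rk j) m * ?d j m)"
  proof
    fix j assume j: "j \<in> {1..n}"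
    have "periodic_grid N (w j)" "periodic_grid N (w' j)" "periodic_grid N (rk j)"
      using f f' rkper j unfolding feas_def by auto
    then show "periodic_grid N (\<lambda>m. hat (rk j) m * ?d j m)"
      by (intro per_mult hat_per per_diff)
  qed
  have perr: "\<forall>j\<in>{1..n}. periodic_grid N (r j)" using f unfolding feas_def by auto
  have rho: "\<forall>j\<in>{1..n}. \<forall>l\<in>{1..int N}. ?rho j l = - d_h h (\<lambda>m. hat (rk j) m * ?d j m) l"
  proof (intro ballI)
    fix j l assume j: "j \<in> {1..n}" and l: "l \<in> {1..int N}"
    have "r j l - rk j l + d_h h (\<lambda>m. hat (rk j) m * w j m) l = 0"
      "r' j l - rk j l + d_h h (\<lambda>m. hat (rk j) m * w' j m) l = 0" using f f' j l unfolding feas_def by auto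
    moreover have "(\<lambda>m. hat (rk j) m * ?d j m) = (\<lambda>m. hat (rk j) m * w' j m - hat (rk j) m * w j m)"
      by (simp add: algebra_simps)
    ultimately show "?rho j l = - d_h h (\<lambda>m. hat (rk j) m * ?d j m) l"
      by (simp add: d_h_diff)
  qed
  have FV0: "1 / (4 * dt) * h * (\<Sum>l\<in>{1..int N}. \<Sum>i\<in>{1..n}. \<Sum>j\<in>{1..n}.
            b i j * hat (rk i) l * hat (rk j) l * (2 * (w i l - w j l) * (?d i l - ?d j l)))
         + h * (\<Sum>l\<in>{1..int N}. \<Sum>i\<in>{1..n}. (ln (r i l) + 1) * ?rho i l) = 0"
  proof -
    have "1 / (4 * dt) * h * (\<Sum>l\<in>{1..int N}. \<Sum>i\<in>{1..n}. \<Sum>j\<in>{1..n}.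
            b i j * hat (rk i) l * hat (rk j) l * (2 * (w i l - w j l) * (?d i l - ?d j l)))
         + h * (\<Sum>l\<in>{1..int N}. \<Sum>i\<in>{1..n}. (ln (r i l) + 1) * ?rho i l)
       = h * (\<Sum>l\<in>{1..int N}. \<Sum>i\<in>{1..n}. hat (rk i) l * ?d i l *
            (D_h h (\<lambda>m. ln (r i m)) l + 1 / dt * (\<Sum>j\<in>{1..n}. b i j * hat (rk j) l * (w i l - w j l))))"
      by (rule FV[OF h sym perphi perr rho])
    also have "\<dots> = h * (\<Sum>l\<in>{1..int N}. S l * (\<Sum>i\<in>{1..n}. hat (rk i) l * ?d i l))"
    proof (rule arg_cong[where f="\<lambda>x. h * x"], rule sum.cong[OF refl])
      fix l assume l: "l \<in> {1..int N}"
      have "(\<Sum>i\<in>{1..n}. hat (rk i) l * ?d i l *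
            (D_h h (\<lambda>m. ln (r i m)) l + 1 / dt * (\<Sum>j\<in>{1..n}. b i j * hat (rk j) l * (w i l - w j l))))
          = (\<Sum>i\<in>{1..n}. S l * (hat (rk i) l * ?d i l))"
        by (rule sum.cong[OF refl]) (use g l in simp)
      then show "(\<Sum>i\<in>{1..n}. hat (rk i) l * ?d i l *
            (D_h h (\<lambda>m. ln (r i m)) l + 1 / dt * (\<Sum>j\<in>{1..n}. b i j * hat (rk j) l * (w i l - w j l))))
          = S l * (\<Sum>i\<in>{1..n}. hat (rk i) l * ?d i l)" by (simp add: sum_distrib_left)
    qed
    also have "\<dots> = 0"
    proof -
      have "\<forall>l\<in>{1..int N}. (\<Sum>i\<in>{1..n}. hat (rk i) l * ?d i l) = 0"
        using f f' unfolding feas_def by (simp add: right_diff_distrib sum_subtractf)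
      then show ?thesis by simp
    qed
    finally show ?thesis .
  qed
  have Qi: "Qs n N b rk w' - Qs n N b rk w \<ge> (\<Sum>l\<in>{1..int N}. \<Sum>i\<in>{1..n}. \<Sum>j\<in>{1..n}.
            b i j * hat (rk i) l * hat (rk j) l * (2 * (w i l - w j l) * (?d i l - ?d j l)))"
    unfolding Qs_def sum_subtractf[symmetric]
  proof (intro sum_mono)
    fix l i j assume i: "i \<in> {1..n}" and j: "j \<in> {1..n}"
    show "b i j * hat (rk i) l * hat (rk j) l * (2 * (w i l - w j l) * (?d i l - ?d j l))
       \<le> b i j * hat (rk i) l * hat (rk j) l * (w' i l - w' j l)\<^sup>2 - b i j * hat (rk i) l * hat (rk j) l * (w i l - w j l)\<^sup>2"
    proof (cases "i = j")
      case True then show ?thesis by simp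
    next
      case False
      then have c: "b i j * hat (rk i) l * hat (rk j) l \<ge> 0"
        using bpos i j rkpos hat_pos[of "rk i"] hat_pos[of "rk j"] by (simp add: less_imp_le)
      have "2 * (w i l - w j l) * (?d i l - ?d j l) \<le> (w' i l - w' j l)\<^sup>2 - (w i l - w j l)\<^sup>2"
      proof -
        have "(w' i l - w' j l)\<^sup>2 - (w i l - w j l)\<^sup>2 - 2 * (w i l - w j l) * (?d i l - ?d j l)
            = ((w' i l - w' j l) - (w i l - w j l))\<^sup>2" by (simp add: power2_eq_square algebra_simps)
        moreover have "((w' i l - w' j l) - (w i l - w j l))\<^sup>2 \<ge> 0" by simp
        ultimately show ?thesis by linarith
      qed
      then have "b i j * hat (rk i) l * hat (rk j) l * (2 * (w i l - w j l) * (?d i l - ?d j l))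
          \<le> b i j * hat (rk i) l * hat (rk j) l * ((w' i l - w' j l)\<^sup>2 - (w i l - w j l)\<^sup>2)"
        using c by (rule mult_left_mono)
      then show ?thesis by (simp only: right_diff_distrib)
    qed
  qed
  have Ei: "Es n N r' - Es n N r \<ge> (\<Sum>l\<in>{1..int N}. \<Sum>i\<in>{1..n}. (ln (r i l) + 1) * ?rho i l)"
    unfolding Es_def sum_subtractf[symmetric]
  proof (intro sum_mono)
    fix l i assume l: "l \<in> {1..int N}" and i: "i \<in> {1..n}"
    show "(ln (r i l) + 1) * ?rho i l \<le> r' i l * ln (r' i l) - r i l * ln (r i l)"
    proof -
      have "r i l * ln (r i l) - r' i l * ln (r' i l) \<le> (ln (r i l) + 1) * (r i l - r' i l)"
        using xlnx_tangent[of "r' i l" "r i l"] rpos rpos' i l by auto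
      moreover have "(ln (r i l) + 1) * (r i l - r' i l) = - ((ln (r i l) + 1) * (r' i l - r i l))"
        by (simp add: algebra_simps)
      ultimately show ?thesis by linarith
    qed
  qed
  have "J_fun n N h dt b rk r' w' - J_fun n N h dt b rk r w
      = 1 / (4 * dt) * h * (Qs n N b rk w' - Qs n N b rk w) + h * (Es n N r' - Es n N r)"
    unfolding J_split by (simp add: algebra_simps)
  also have "\<dots> \<ge> 1 / (4 * dt) * h * (\<Sum>l\<in>{1..int N}. \<Sum>i\<in>{1..n}. \<Sum>j\<in>{1..n}.
            b i j * hat (rk i) l * hat (rk j) l * (2 * (w i l - w j l) * (?d i l - ?d j l)))
         + h * (\<Sum>l\<in>{1..int N}. \<Sum>i\<in>{1..n}. (ln (r i l) + 1) * ?rho i l)"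
    using Qi Ei h dt by (intro add_mono mult_left_mono) auto
  finally show ?thesis using FV0 by linarith
qed




lemma sum_ind:
  fixes G :: "int \<Rightarrow> real"
  assumes N: "N \<ge> 1" and p: "periodic_grid N G"
  shows "(\<Sum>l\<in>{1..int N}. (if l mod int N = e0 mod int N then 1 else 0) * G l) = G e0"
proof -
  define l1 where "l1 = (e0 - 1) mod int N + 1"
  have Npos: "int N > 0" using N by simp
  have l1in: "l1 \<in> {1..int N}"
  proof -
    have "(e0 - 1) mod int N < int N" "(e0 - 1) mod int N \<ge> 0" using Npos by simp_all
    then show ?thesis unfolding l1_def by simp
  qed
  have l1mod: "l1 mod int N = e0 mod int N"
    unfolding l1_def by (simp add: mod_add_left_eq)
  have iff: "\<And>l. l \<in> {1..int N} \<Longrightarrow> (l mod int N = e0 mod int N) = (l = l1)"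
  proof
    fix l assume l: "l \<in> {1..int N}" and e: "l mod int N = e0 mod int N"
    have "(l - 1) mod int N = (e0 - 1) mod int N"
      using e by (metis mod_diff_left_eq)
    moreover have "(l - 1) mod int N = l - 1" using l by (intro mod_pos_pos_trivial) auto
    ultimately show "l = l1" unfolding l1_def by simp
  next
    fix l assume "l = l1" then show "l mod int N = e0 mod int N" using l1mod by simp
  qed
  have "(\<Sum>l\<in>{1..int N}. (if l mod int N = e0 mod int N then 1 else 0) * G l)
      = (\<Sum>l\<in>{1..int N}. (if l = l1 then G l else 0))"
    by (rule sum.cong[OF refl]) (simp add: iff)
  also have "\<dots> = G l1" using l1in by simp
  also have "\<dots> = G e0" using per_mod[OF p l1mod] .
  finally show ?thesis .
qed

lemma per_sum: "(\<And>j. j \<in> A \<Longrightarrow> periodic_grid N (f j)) \<Longrightarrow> periodic_grid N (\<lambda>l. \<Sum>j\<in>A. f j l)"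
  unfolding periodic_grid_def by simp

lemma dQpt: "((\<lambda>e. c * ((x + e * p) - (y + e * q))^2) has_real_derivative c * (2 * (x - y) * (p - q))) (at 0)"
  by (auto intro!: derivative_eq_intros)

lemma dEpt: "x > 0 \<Longrightarrow> ((\<lambda>e. (x + e * p) * ln (x + e * p)) has_real_derivative (ln x + 1) * p) (at 0)"
  by (auto intro!: derivative_eq_intros simp: algebra_simps)


lemma first_order:
  fixes \<delta> :: real
  assumes h: "h > 0" and dt: "dt > 0" and N1: "N \<ge> 1"
    and bpos: "\<forall>i\<in>{1..n}. \<forall>j\<in>{1..n}. i \<noteq> j \<longrightarrow> b i j > 0 \<and> b i j = b j i"
    and rkpos: "\<forall>i\<in>{1..n}. \<forall>l. rk i l > 0"
    and rkper: "\<forall>i\<in>{1..n}. periodic_grid N (rk i)"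
    and f: "feas n N h rk r w"
    and rd: "\<forall>j\<in>{1..n}. \<forall>l\<in>{1..int N}. r j l > \<delta>" and d0: "\<delta> > 0"
    and mn: "\<forall>r' w'. feas n N h rk r' w' \<and> (\<forall>j\<in>{1..n}. \<forall>l\<in>{1..int N}. r' j l \<ge> \<delta>)
              \<longrightarrow> J_fun n N h dt b rk r w \<le> J_fun n N h dt b rk r' w'"
    and i: "i \<in> {1..n}" and k: "k \<in> {1..n}" and ik: "i \<noteq> k"
  shows "D_h h (\<lambda>m. ln (r i m)) e0 + 1 / dt * (\<Sum>j\<in>{1..n}. b i j * hat (rk j) e0 * (w i e0 - w j e0))
       = D_h h (\<lambda>m. ln (r k m)) e0 + 1 / dt * (\<Sum>j\<in>{1..n}. b k j * hat (rk j) e0 * (w k e0 - w j e0))"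
proof -
  define g where "g = (\<lambda>q l. D_h h (\<lambda>m. ln (r q m)) l + 1 / dt * (\<Sum>j\<in>{1..n}. b q j * hat (rk j) l * (w q l - w j l)))"
  define ind where "ind = (\<lambda>l::int. if l mod int N = e0 mod int N then (1::real) else 0)"
  define phi where "phi = (\<lambda>j l. if j = i then ind l else if j = k then - ind l else (0::real))"
  define d where "d = (\<lambda>j l. phi j l / hat (rk j) l)"
  define rho where "rho = (\<lambda>j l. - d_h h (phi j) l)"
  have sym: "\<forall>i\<in>{1..n}. \<forall>j\<in>{1..n}. i \<noteq> j \<longrightarrow> b i j = b j i" using bpos by blast
  have hatd: "\<And>j m. hat (rk j) m * d j m = phi j m"
  proof -
    fix j m
    show "hat (rk j) m * d j m = phi j m"
    proof (cases "j = i \<or> j = k")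
      case True
      then have "j \<in> {1..n}" using i k by auto
      then have "hat (rk j) m > 0" using rkpos hat_pos by blast
      then show ?thesis unfolding d_def by simp
    next
      case False then show ?thesis unfolding d_def phi_def by simp
    qed
  qed
  have hatd': "\<And>j. (\<lambda>m. hat (rk j) m * d j m) = phi j" using hatd by (simp add: fun_eq_iff)
  have indper: "periodic_grid N ind" unfolding periodic_grid_def ind_def by simp
  have phiper: "\<And>j. periodic_grid N (phi j)"
    unfolding phi_def using indper by (simp add: periodic_grid_def)
  have rhoper: "\<And>j. periodic_grid N (rho j)"
    unfolding rho_def using per_comp[OF per_d_h[OF phiper], of uminus] by simp
  have perr: "\<forall>j\<in>{1..n}. periodic_grid N (r j)" and perw: "\<forall>j\<in>{1..n}. periodic_grid N (w j)"
    using f unfolding feas_def by auto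
  have ind01: "\<And>l. ind l = 0 \<or> ind l = 1" unfolding ind_def by simp
  have rho_bd: "\<And>j l. \<bar>rho j l\<bar> \<le> 1 / h"
  proof -
    fix j l
    have "\<bar>phi j l - phi j (l - 1)\<bar> \<le> 1"
      unfolding phi_def using ind01[of l] ind01[of "l - 1"] by auto
    then show "\<bar>rho j l\<bar> \<le> 1 / h" unfolding rho_def d_h_def using h
      by (simp add: abs_div divide_right_mono)
  qed
  have sumphi: "\<And>l. (\<Sum>j\<in>{1..n}. phi j l) = 0"
  proof -
    fix l
    have "(\<Sum>j\<in>{1..n}. phi j l) = (\<Sum>j\<in>{1..n}. (if j = i then ind l else 0) + (if j = k then - ind l else 0))"
      by (rule sum.cong[OF refl]) (use ik in \<open>simp add: phi_def\<close>)
    also have "\<dots> = 0" using i k by (simp only: sum.distrib) simp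
    finally show "(\<Sum>j\<in>{1..n}. phi j l) = 0" .
  qed
  have sumrho: "\<And>l. (\<Sum>j\<in>{1..n}. rho j l) = 0"
  proof -
    fix l
    have "(\<Sum>j\<in>{1..n}. rho j l) = (\<Sum>j\<in>{1..n}. (phi j (l - 1) - phi j l) / h)"
      unfolding rho_def d_h_def by (rule sum.cong[OF refl]) (simp add: minus_divide_left)
    also have "\<dots> = (\<Sum>j\<in>{1..n}. phi j (l - 1) - phi j l) / h" by (simp add: sum_divide_distrib)
    also have "\<dots> = ((\<Sum>j\<in>{1..n}. phi j (l - 1)) - (\<Sum>j\<in>{1..n}. phi j l)) / h" by (simp add: sum_subtractf)
    finally show "(\<Sum>j\<in>{1..n}. rho j l) = 0" using sumphi by simp
  qed
  define S where "S = (\<lambda>(j, l). r j l - \<delta>) ` ({1..n} \<times> {1..int N})"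
  have Sfin: "finite S" unfolding S_def by simp
  have Sne: "S \<noteq> {}" unfolding S_def using i N1 by auto
  define mu where "mu = Min S"
  have mupos: "mu > 0" unfolding mu_def using Sfin Sne rd by (auto simp: S_def Min_gr_iff)
  have mule: "\<And>j l. j \<in> {1..n} \<Longrightarrow> l \<in> {1..int N} \<Longrightarrow> mu \<le> r j l - \<delta>"
    unfolding mu_def using Sfin by (intro Min_le) (auto simp: S_def)
  define F where "F = (\<lambda>e. J_fun n N h dt b rk (\<lambda>j l. r j l + e * rho j l) (\<lambda>j l. w j l + e * d j l))"
  have F0: "F 0 = J_fun n N h dt b rk r w" unfolding F_def by simp
  have loc: "\<forall>y. \<bar>0 - y\<bar> < h * mu \<longrightarrow> F 0 \<le> F y"
  proof (intro allI impI)
    fix y assume y: "\<bar>0 - y\<bar> < h * mu"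
    have fy: "feas n N h rk (\<lambda>j l. r j l + y * rho j l) (\<lambda>j l. w j l + y * d j l)"
      unfolding feas_def
    proof (intro conjI ballI)
      fix j assume j: "j \<in> {1..n}"
      show "periodic_grid N (\<lambda>l. r j l + y * rho j l)"
        using perr j rhoper by (intro per_add per_cmult) auto
      show "periodic_grid N (\<lambda>l. w j l + y * d j l)"
        unfolding d_def using perw j phiper rkper by (intro per_add per_cmult per_divide hat_per) auto
    next
      fix j l assume j: "j \<in> {1..n}" and l: "l \<in> {1..int N}"
      have e: "r j l - rk j l + d_h h (\<lambda>m. hat (rk j) m * w j m) l = 0" using f j l unfolding feas_def by blast
      have "(\<lambda>m. hat (rk j) m * (w j m + y * d j m)) = (\<lambda>m. hat (rk j) m * w j m + y * phi j m)"
        using hatd by (simp add: fun_eq_iff algebra_simps)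
      then have "d_h h (\<lambda>m. hat (rk j) m * (w j m + y * d j m)) l = d_h h (\<lambda>m. hat (rk j) m * w j m) l + y * d_h h (phi j) l"
        by (simp add: d_h_add d_h_scale)
      then show "r j l + y * rho j l - rk j l + d_h h (\<lambda>m. hat (rk j) m * (w j m + y * d j m)) l = 0"
        using e unfolding rho_def by (simp add: algebra_simps)
    next
      fix l assume l: "l \<in> {1..int N}"
      have "(\<Sum>j\<in>{1..n}. hat (rk j) l * (w j l + y * d j l)) = (\<Sum>j\<in>{1..n}. hat (rk j) l * w j l) + y * (\<Sum>j\<in>{1..n}. phi j l)"
        using hatd by (simp add: distrib_left sum.distrib sum_distrib_left algebra_simps)
      then show "(\<Sum>j\<in>{1..n}. hat (rk j) l * (w j l + y * d j l)) = 0" using f l sumphi unfolding feas_def by simp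
      have "(\<Sum>j\<in>{1..n}. r j l + y * rho j l) = (\<Sum>j\<in>{1..n}. r j l) + y * (\<Sum>j\<in>{1..n}. rho j l)"
        by (simp add: sum.distrib sum_distrib_left)
      then show "(\<Sum>j\<in>{1..n}. r j l + y * rho j l) = 1" using f l sumrho unfolding feas_def by simp
    qed
    have gy: "\<forall>j\<in>{1..n}. \<forall>l\<in>{1..int N}. r j l + y * rho j l \<ge> \<delta>"
    proof (intro ballI)
      fix j l assume j: "j \<in> {1..n}" and l: "l \<in> {1..int N}"
      have "\<bar>y * rho j l\<bar> \<le> \<bar>y\<bar> * (1 / h)" unfolding abs_mult
        using rho_bd by (intro mult_left_mono) auto
      also have "\<dots> < mu" using y h by (simp add: field_simps)
      finally have "\<bar>y * rho j l\<bar> < mu" .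
      then show "r j l + y * rho j l \<ge> \<delta>" using mule[OF j l] by linarith
    qed
    show "F 0 \<le> F y" unfolding F0 unfolding F_def using mn fy gy by blast
  qed
  let ?D = "1 / (4 * dt) * h * (\<Sum>l\<in>{1..int N}. \<Sum>i\<in>{1..n}. \<Sum>j\<in>{1..n}.
            b i j * hat (rk i) l * hat (rk j) l * (2 * (w i l - w j l) * (d i l - d j l)))
         + h * (\<Sum>l\<in>{1..int N}. \<Sum>i\<in>{1..n}. (ln (r i l) + 1) * rho i l)"
  have dQ: "((\<lambda>e. \<Sum>l\<in>{1..int N}. \<Sum>i\<in>{1..n}. \<Sum>j\<in>{1..n}.
            b i j * hat (rk i) l * hat (rk j) l * ((w i l + e * d i l) - (w j l + e * d j l))^2)
         has_real_derivative (\<Sum>l\<in>{1..int N}. \<Sum>i\<in>{1..n}. \<Sum>j\<in>{1..n}.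
            b i j * hat (rk i) l * hat (rk j) l * (2 * (w i l - w j l) * (d i l - d j l)))) (at 0)"
    by (intro DERIV_sum dQpt)
  have dE: "((\<lambda>e. \<Sum>l\<in>{1..int N}. \<Sum>i\<in>{1..n}. (r i l + e * rho i l) * ln (r i l + e * rho i l))
         has_real_derivative (\<Sum>l\<in>{1..int N}. \<Sum>i\<in>{1..n}. (ln (r i l) + 1) * rho i l)) (at 0)"
  proof (intro DERIV_sum dEpt)
    fix l q assume "l \<in> {1..int N}" "q \<in> {1..n}"
    then show "r q l > 0" using rd d0 by force
  qed
  have dF: "(F has_real_derivative ?D) (at 0)"
    unfolding F_def J_fun_def by (intro DERIV_add DERIV_cmult dQ dE)
  have D0: "?D = 0" by (rule DERIV_local_min[OF dF _ loc]) (use h mupos in simp)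
  have "?D = h * (\<Sum>l\<in>{1..int N}. \<Sum>q\<in>{1..n}. hat (rk q) l * d q l * g q l)"
    unfolding g_def by (rule FV[OF h sym _ perr]) (auto simp: hatd' phiper rho_def)
  also have "\<dots> = h * (\<Sum>l\<in>{1..int N}. ind l * (g i l - g k l))"
  proof -
    have "\<And>l. (\<Sum>q\<in>{1..n}. hat (rk q) l * d q l * g q l) = ind l * (g i l - g k l)"
    proof -
      fix l
      have "(\<Sum>q\<in>{1..n}. hat (rk q) l * d q l * g q l)
          = (\<Sum>q\<in>{1..n}. (if q = i then ind l * g i l else 0) + (if q = k then - (ind l * g k l) else 0))"
        by (rule sum.cong[OF refl]) (use ik in \<open>simp add: hatd phi_def\<close>)
      also have "\<dots> = ind l * (g i l - g k l)" using i k by (simp only: sum.distrib) (simp add: algebra_simps)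
      finally show "(\<Sum>q\<in>{1..n}. hat (rk q) l * d q l * g q l) = ind l * (g i l - g k l)" .
    qed
    then show ?thesis by simp
  qed
  also have "\<dots> = h * (g i e0 - g k e0)"
  proof -
    have gper: "\<And>q. q \<in> {1..n} \<Longrightarrow> periodic_grid N (g q)"
    proof -
      fix q assume q: "q \<in> {1..n}"
      have "periodic_grid N (\<lambda>l. D_h h (\<lambda>m. ln (r q m)) l + 1 / dt * (\<Sum>j\<in>{1..n}. b q j * hat (rk j) l * (w q l - w j l)))"
      proof (rule per_add)
        have "periodic_grid N (\<lambda>m. ln (r q m))" by (rule per_comp) (use perr q in auto)
        then show "periodic_grid N (D_h h (\<lambda>m. ln (r q m)))" by (rule per_D_h)
        have "periodic_grid N (\<lambda>l. \<Sum>j\<in>{1..n}. b q j * hat (rk j) l * (w q l - w j l))"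
        proof (rule per_sum)
          fix j assume j: "j \<in> {1..n}"
          have "periodic_grid N (\<lambda>l. b q j * hat (rk j) l)" using rkper j by (intro per_cmult hat_per) auto
          moreover have "periodic_grid N (\<lambda>l. w q l - w j l)" using perw j q by (intro per_diff) auto
          ultimately show "periodic_grid N (\<lambda>l. b q j * hat (rk j) l * (w q l - w j l))" by (rule per_mult)
        qed
        then show "periodic_grid N (\<lambda>l. 1 / dt * (\<Sum>j\<in>{1..n}. b q j * hat (rk j) l * (w q l - w j l)))"
          by (rule per_cmult)
      qed
      then show "periodic_grid N (g q)" unfolding g_def .
    qed
    have "periodic_grid N (\<lambda>l. g i l - g k l)" using gper i k by (intro per_diff) auto
    from sum_ind[OF N1 this, of e0] show ?thesis unfolding ind_def by simp
  qed
  finally have "h * (g i e0 - g k e0) = 0" using D0 by simp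
  then show ?thesis using h unfolding g_def by simp
qed




lemma rep_exists: "N \<ge> 1 \<Longrightarrow> \<exists>l1\<in>{1..int N}. l1 mod int N = l mod int N"
proof -
  assume N: "N \<ge> 1"
  define l1 where "l1 = (l - 1) mod int N + 1"
  have Npos: "int N > 0" using N by simp
  have "(l - 1) mod int N < int N" "(l - 1) mod int N \<ge> 0" using Npos by simp_all
  then have "l1 \<in> {1..int N}" unfolding l1_def by simp
  moreover have "l1 mod int N = l mod int N" unfolding l1_def by (simp add: mod_add_left_eq)
  ultimately show ?thesis by blast
qed

lemma per_zero:
  assumes "N \<ge> 1" "periodic_grid N E" "\<forall>l\<in>{1..int N}. E l = 0"
  shows "E l = 0"
proof -
  obtain l1 where "l1 \<in> {1..int N}" "l1 mod int N = l mod int N" using rep_exists[OF assms(1)] by blast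
  then show ?thesis using per_mod[OF assms(2), of l1 l] assms(3) by simp
qed

lemma hat_sum: "\<forall>l. (\<Sum>i\<in>A. f i l) = (1::real) \<Longrightarrow> (\<Sum>i\<in>A. hat (f i) l) = 1"
  unfolding hat_def by (simp add: sum_divide_distrib[symmetric] sum.distrib)

lemma d_h_sum: "(\<Sum>i\<in>A. d_h h (f i) l) = d_h h (\<lambda>m. \<Sum>i\<in>A. f i m) l"
  unfolding d_h_def by (simp add: sum_divide_distrib[symmetric] sum_subtractf)

lemma antisym_sum:
  fixes H W :: "nat \<Rightarrow> real" and b :: "nat \<Rightarrow> nat \<Rightarrow> real"
  assumes sym: "\<forall>i\<in>A. \<forall>j\<in>A. i \<noteq> j \<longrightarrow> b i j = b j i"
  shows "(\<Sum>i\<in>A. H i * (\<Sum>j\<in>A. b i j * H j * (W i - W j))) = 0"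
proof -
  have "(\<Sum>i\<in>A. \<Sum>j\<in>A. b i j * H i * H j * (2 * (W i - W j) * (1 - 1)))
       = 4 * (\<Sum>i\<in>A. H i * 1 * (\<Sum>j\<in>A. b i j * H j * (W i - W j)))"
    by (rule Qpt[OF sym])
  then show ?thesis by simp
qed


theorem theorem3p1:
  fixes n N :: nat and L dt :: real
    and b :: "nat \<Rightarrow> nat \<Rightarrow> real"
    and rk :: "nat \<Rightarrow> int \<Rightarrow> real"
  assumes "n \<ge> 2" and "N \<ge> 1" and "L > 0" and "dt > 0"
    and "\<forall>i\<in>{1..n}. \<forall>j\<in>{1..n}. i \<noteq> j \<longrightarrow> b i j > 0 \<and> b i j = b j i"
    and "\<forall>i\<in>{1..n}. periodic_grid N (rk i)"
    and "\<forall>i\<in>{1..n}. \<forall>l. rk i l > 0"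
    and "\<forall>l. (\<Sum>i\<in>{1..n}. rk i l) = 1"
  shows "\<exists>\<delta>0 > 0. \<forall>\<delta>. 0 < \<delta> \<and> \<delta> \<le> \<delta>0 \<longrightarrow>
     (\<forall>r :: nat \<Rightarrow> int \<Rightarrow> real.
        (\<forall>i\<in>{1..n}. periodic_grid N (r i)) \<and> (\<forall>i\<in>{1..n}. \<forall>l. r i l > 0) \<longrightarrow>
        (scheme_solution n N (L / real N) dt b rk r \<longleftrightarrow>
         (\<exists>w. (r, w) \<in> K_set n N (L / real N) \<delta> rk \<and>
              (\<forall>(r', w') \<in> K_set n N (L / real N) \<delta> rk.
                 J_fun n N (L / real N) dt b rk r w \<le> J_fun n N (L / real N) dt b rk r' w'))))"
proof -
  note n2 = assms(1) and N1 = assms(2) and L = assms(3) and dt = assms(4)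
    and bpos = assms(5) and rkper = assms(6) and rkpos = assms(7) and rksum = assms(8)
  define h where "h = L / real N"
  have h: "h > 0" unfolding h_def using L N1 by simp
  have sym: "\<forall>i\<in>{1..n}. \<forall>j\<in>{1..n}. i \<noteq> j \<longrightarrow> b i j = b j i" using bpos by blast
  have bpos': "\<forall>i\<in>{1..n}. \<forall>j\<in>{1..n}. i \<noteq> j \<longrightarrow> b i j > 0" using bpos by blast
  have rkle: "\<forall>i\<in>{1..n}. \<forall>l. rk i l \<le> 1"
  proof (intro ballI allI)
    fix i l assume i: "i \<in> {1..n}"
    have "rk i l \<le> (\<Sum>j\<in>{1..n}. rk j l)"
      using i rkpos by (intro member_le_sum) (auto simp: less_imp_le)
    then show "rk i l \<le> 1" using rksum by simp
  qed
  define MS where "MS = (\<lambda>(i, l). rk i l) ` ({1..n} \<times> {1..int N})"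
  have MSfin: "finite MS" unfolding MS_def by simp
  have MSne: "MS \<noteq> {}" unfolding MS_def using n2 N1 by auto
  define m where "m = Min MS"
  have mpos: "m > 0" unfolding m_def using MSfin MSne rkpos by (auto simp: MS_def Min_gr_iff)
  have mle: "\<forall>i\<in>{1..n}. \<forall>l\<in>{1..int N}. m \<le> rk i l"
    unfolding m_def using MSfin by (auto simp: MS_def intro!: Min_le)
  have m1: "m \<le> 1"
  proof -
    have "(1::nat) \<in> {1..n}" "(1::int) \<in> {1..int N}" using n2 N1 by auto
    then have "m \<le> rk 1 1" "rk 1 1 \<le> 1" using mle rkle by blast+
    then show ?thesis by linarith
  qed
  define K where "K = real n * real N * (- ln m)"
  define d1 where "d1 = min (m / 2) (min (1 / 4) (exp (- 2 * K / m) / 4))"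
  have d1pos: "d1 > 0" unfolding d1_def using mpos by simp
  have small: "\<And>a. 0 < a \<Longrightarrow> a \<le> d1 \<Longrightarrow> m / 2 * ln (2 * a) + real n * real N * (- ln m) < 0"
  proof -
    fix a :: real assume a: "0 < a" "a \<le> d1"
    have "2 * a < exp (- 2 * K / m)"
    proof -
      have "a \<le> exp (- 2 * K / m) / 4" using a unfolding d1_def by simp
      moreover have "exp (- 2 * K / m) > 0" by simp
      ultimately show ?thesis by linarith
    qed
    then have "ln (2 * a) < ln (exp (- 2 * K / m))"
      by (subst ln_less_cancel_iff) (use a in auto)
    then have "ln (2 * a) < - 2 * K / m" by simp
    then have "m / 2 * ln (2 * a) < m / 2 * (- 2 * K / m)" using mpos by (intro mult_strict_left_mono) auto
    also have "\<dots> = - K" using mpos by simp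
    finally show "m / 2 * ln (2 * a) + real n * real N * (- ln m) < 0" unfolding K_def by simp
  qed
  have d1m: "d1 \<le> m / 2" and d14: "d1 \<le> 1 / 4" unfolding d1_def by auto
  have improve: "\<And>r w a i0 l0. feas n N h rk r w \<Longrightarrow> (\<forall>i\<in>{1..n}. \<forall>l\<in>{1..int N}. r i l > 0)
      \<Longrightarrow> i0 \<in> {1..n} \<Longrightarrow> l0 \<in> {1..int N} \<Longrightarrow> a = r i0 l0 \<Longrightarrow> a \<le> d1 \<Longrightarrow>
      feas n N h rk (\<lambda>i l. (1 - a) * r i l + a * rk i l) (\<lambda>i l. (1 - a) * w i l) \<and>
      J_fun n N h dt b rk (\<lambda>i l. (1 - a) * r i l + a * rk i l) (\<lambda>i l. (1 - a) * w i l) < J_fun n N h dt b rk r w"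
  proof
    fix r w a i0 l0
    assume f: "feas n N h rk r w" and rp: "\<forall>i\<in>{1..n}. \<forall>l\<in>{1..int N}. r i l > 0"
      and i0: "i0 \<in> {1..n}" and l0: "l0 \<in> {1..int N}" and a: "a = r i0 l0" and ad: "a \<le> d1"
    show "feas n N h rk (\<lambda>i l. (1 - a) * r i l + a * rk i l) (\<lambda>i l. (1 - a) * w i l)"
      by (rule core_feas[OF rkper rksum f])
    have rsum: "\<forall>l\<in>{1..int N}. (\<Sum>i\<in>{1..n}. r i l) = 1" using f unfolding feas_def by blast
    have rle: "\<forall>i\<in>{1..n}. \<forall>l\<in>{1..int N}. r i l \<le> 1"
    proof (intro ballI)
      fix i l assume i: "i \<in> {1..n}" and l: "l \<in> {1..int N}"
      have "r i l \<le> (\<Sum>j\<in>{1..n}. r j l)"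
        using i l rp by (intro member_le_sum) (auto simp: less_imp_le)
      then show "r i l \<le> 1" using rsum l by simp
    qed
    have apos: "a > 0" using rp i0 l0 a by auto
    show "J_fun n N h dt b rk (\<lambda>i l. (1 - a) * r i l + a * rk i l) (\<lambda>i l. (1 - a) * w i l) < J_fun n N h dt b rk r w"
      by (rule core_J[OF dt h bpos' rkpos rkle rksum mpos m1 mle rp rle rsum i0 l0 a])
        (use ad d1m d14 small[OF apos ad] in auto)
  qed
  show ?thesis
  proof (rule exI[of _ d1], intro conjI allI impI d1pos)
    fix \<delta> :: real and r :: "nat \<Rightarrow> int \<Rightarrow> real"
    assume dd: "0 < \<delta> \<and> \<delta> \<le> d1"
      and rr: "(\<forall>i\<in>{1..n}. periodic_grid N (r i)) \<and> (\<forall>i\<in>{1..n}. \<forall>l. r i l > 0)"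
    have d0: "\<delta> > 0" and dd1: "\<delta> \<le> d1" using dd by auto
    have rper: "\<forall>i\<in>{1..n}. periodic_grid N (r i)" and rpos: "\<forall>i\<in>{1..n}. \<forall>l. r i l > 0" using rr by auto
    have rpos': "\<forall>i\<in>{1..n}. \<forall>l\<in>{1..int N}. r i l > 0" using rpos by auto
    have hatsum: "\<And>l. (\<Sum>j\<in>{1..n}. hat (rk j) l) = 1" using hat_sum[OF rksum] by blast
    show "scheme_solution n N (L / real N) dt b rk r \<longleftrightarrow>
         (\<exists>w. (r, w) \<in> K_set n N (L / real N) \<delta> rk \<and>
              (\<forall>(r', w') \<in> K_set n N (L / real N) \<delta> rk.
                 J_fun n N (L / real N) dt b rk r w \<le> J_fun n N (L / real N) dt b rk r' w'))"
      unfolding h_def[symmetric]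
    proof
      assume "scheme_solution n N h dt b rk r"
      then obtain v where vper: "\<forall>i\<in>{1..n}. periodic_grid N (v i)"
        and eqs: "\<forall>i\<in>{1..n}. \<forall>l::int.
         (r i l - rk i l) / dt + d_h h (\<lambda>m. hat (rk i) m * v i m) l = 0 \<and>
         - (\<Sum>j\<in>{1..n}. b i j * hat (rk j) l * (v i l - v j l))
           = D_h h (\<lambda>m. ln (r i m)) l
             - (1 / (\<Sum>j\<in>{1..n}. hat (rk j) l))
               * (\<Sum>j\<in>{1..n}. hat (rk j) l * D_h h (\<lambda>m. ln (r j m)) l)"
        and vsum: "\<forall>l::int. (\<Sum>j\<in>{1..n}. hat (rk j) l * v j l) = 0"
        unfolding scheme_solution_def by blast
      define w where "w = (\<lambda>i l. dt * v i l)"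
      have dhw: "\<And>i l. d_h h (\<lambda>m. hat (rk i) m * w i m) l = dt * d_h h (\<lambda>m. hat (rk i) m * v i m) l"
      proof -
        fix i l
        have "(\<lambda>m. hat (rk i) m * w i m) = (\<lambda>m. dt * (hat (rk i) m * v i m))" unfolding w_def
          by (simp add: fun_eq_iff algebra_simps)
        then show "d_h h (\<lambda>m. hat (rk i) m * w i m) l = dt * d_h h (\<lambda>m. hat (rk i) m * v i m) l"
          by (simp add: d_h_scale)
      qed
      have mass: "\<And>i l. i \<in> {1..n} \<Longrightarrow> r i l - rk i l + d_h h (\<lambda>m. hat (rk i) m * w i m) l = 0"
      proof -
        fix i l assume i: "i \<in> {1..n}"
        have "(r i l - rk i l) / dt + d_h h (\<lambda>m. hat (rk i) m * v i m) l = 0" using eqs i by blast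
        then have "dt * ((r i l - rk i l) / dt + d_h h (\<lambda>m. hat (rk i) m * v i m) l) = 0" by simp
        moreover have "dt * ((r i l - rk i l) / dt + d_h h (\<lambda>m. hat (rk i) m * v i m) l)
            = r i l - rk i l + dt * d_h h (\<lambda>m. hat (rk i) m * v i m) l"
          using dt by (simp add: distrib_left)
        ultimately show "r i l - rk i l + d_h h (\<lambda>m. hat (rk i) m * w i m) l = 0"
          unfolding dhw by simp
      qed
      have wsum: "\<And>l. (\<Sum>j\<in>{1..n}. hat (rk j) l * w j l) = 0"
      proof -
        fix l
        have "(\<Sum>j\<in>{1..n}. hat (rk j) l * w j l) = dt * (\<Sum>j\<in>{1..n}. hat (rk j) l * v j l)"
          unfolding w_def by (simp add: sum_distrib_left algebra_simps)
        then show "(\<Sum>j\<in>{1..n}. hat (rk j) l * w j l) = 0" using vsum by simp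
      qed
      have rsum: "\<And>l. (\<Sum>j\<in>{1..n}. r j l) = 1"
      proof -
        fix l
        have "(\<Sum>j\<in>{1..n}. r j l - rk j l + d_h h (\<lambda>m. hat (rk j) m * w j m) l) = 0"
          using mass by simp
        moreover have "(\<Sum>j\<in>{1..n}. d_h h (\<lambda>m. hat (rk j) m * w j m) l) = 0"
          unfolding d_h_sum using wsum by (simp add: d_h_def)
        ultimately have "(\<Sum>j\<in>{1..n}. r j l) - (\<Sum>j\<in>{1..n}. rk j l) = 0"
          by (simp add: sum.distrib sum_subtractf)
        then show "(\<Sum>j\<in>{1..n}. r j l) = 1" using rksum by simp
      qed
      have f: "feas n N h rk r w"
        unfolding feas_def using rper vper mass wsum rsum
        by (auto simp: w_def intro: per_cmult)
      define S where "S = (\<lambda>l. \<Sum>j\<in>{1..n}. hat (rk j) l * D_h h (\<lambda>m. ln (r j m)) l)"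
      have g: "\<forall>i\<in>{1..n}. \<forall>l\<in>{1..int N}.
        D_h h (\<lambda>m. ln (r i m)) l + 1 / dt * (\<Sum>j\<in>{1..n}. b i j * hat (rk j) l * (w i l - w j l)) = S l"
      proof (intro ballI)
        fix i l assume i: "i \<in> {1..n}"
        have e: "- (\<Sum>j\<in>{1..n}. b i j * hat (rk j) l * (v i l - v j l)) = D_h h (\<lambda>m. ln (r i m)) l - S l"
          using eqs i hatsum unfolding S_def by simp
        have "1 / dt * (\<Sum>j\<in>{1..n}. b i j * hat (rk j) l * (w i l - w j l))
            = (\<Sum>j\<in>{1..n}. b i j * hat (rk j) l * (v i l - v j l))"
          unfolding w_def using dt by (simp add: sum_distrib_left algebra_simps)
        then show "D_h h (\<lambda>m. ln (r i m)) l + 1 / dt * (\<Sum>j\<in>{1..n}. b i j * hat (rk j) l * (w i l - w j l)) = S l"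
          using e by simp
      qed
      have minall: "\<And>r' w'. feas n N h rk r' w' \<Longrightarrow> (\<forall>i\<in>{1..n}. \<forall>l\<in>{1..int N}. r' i l > 0)
          \<Longrightarrow> J_fun n N h dt b rk r w \<le> J_fun n N h dt b rk r' w'"
        by (rule grad_ineq[OF h dt bpos rkpos rkper f _ rpos' _ g])
      have rge: "\<forall>i\<in>{1..n}. \<forall>l\<in>{1..int N}. r i l \<ge> \<delta>"
      proof (rule ccontr)
        assume "\<not> ?thesis"
        then obtain i0 l0 where i0: "i0 \<in> {1..n}" and l0: "l0 \<in> {1..int N}" and lt: "r i0 l0 < \<delta>" by force
        define a where "a = r i0 l0"
        have ad: "a \<le> d1" using lt dd1 unfolding a_def by simp
        have apos: "a > 0" using rpos i0 unfolding a_def by auto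
        from improve[OF f rpos' i0 l0 a_def ad]
        have f2: "feas n N h rk (\<lambda>i l. (1 - a) * r i l + a * rk i l) (\<lambda>i l. (1 - a) * w i l)"
          and lt2: "J_fun n N h dt b rk (\<lambda>i l. (1 - a) * r i l + a * rk i l) (\<lambda>i l. (1 - a) * w i l) < J_fun n N h dt b rk r w"
          by auto
        have "\<forall>i\<in>{1..n}. \<forall>l\<in>{1..int N}. (1 - a) * r i l + a * rk i l > 0"
        proof (intro ballI)
          fix i l assume "i \<in> {1..n}" "l \<in> {1..int N}"
          then have "r i l > 0" "rk i l > 0" using rpos rkpos by auto
          moreover have "a < 1" using ad d14 by simp
          ultimately show "(1 - a) * r i l + a * rk i l > 0" using apos by (simp add: add_pos_pos)
        qed
        from minall[OF f2 this] lt2 show False by simp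
      qed
      show "\<exists>w. (r, w) \<in> K_set n N h \<delta> rk \<and>
              (\<forall>(r', w') \<in> K_set n N h \<delta> rk. J_fun n N h dt b rk r w \<le> J_fun n N h dt b rk r' w')"
      proof (intro exI conjI)
        show "(r, w) \<in> K_set n N h \<delta> rk" unfolding K_iff using f rge by blast
        show "\<forall>(r', w') \<in> K_set n N h \<delta> rk. J_fun n N h dt b rk r w \<le> J_fun n N h dt b rk r' w'"
        proof (intro ballI, clarify)
          fix r' w' assume "(r', w') \<in> K_set n N h \<delta> rk"
          then have "feas n N h rk r' w'" "\<forall>i\<in>{1..n}. \<forall>l\<in>{1..int N}. r' i l \<ge> \<delta>" unfolding K_iff by auto
          then show "J_fun n N h dt b rk r w \<le> J_fun n N h dt b rk r' w'"
            using minall d0 by force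
        qed
      qed
    next
      assume "\<exists>w. (r, w) \<in> K_set n N h \<delta> rk \<and>
              (\<forall>(r', w') \<in> K_set n N h \<delta> rk. J_fun n N h dt b rk r w \<le> J_fun n N h dt b rk r' w')"
      then obtain w where K: "(r, w) \<in> K_set n N h \<delta> rk"
        and mn0: "\<forall>(r', w') \<in> K_set n N h \<delta> rk. J_fun n N h dt b rk r w \<le> J_fun n N h dt b rk r' w'" by blast
      have f: "feas n N h rk r w" and rge: "\<forall>i\<in>{1..n}. \<forall>l\<in>{1..int N}. r i l \<ge> \<delta>" using K unfolding K_iff by auto
      have mn: "\<forall>r' w'. feas n N h rk r' w' \<and> (\<forall>j\<in>{1..n}. \<forall>l\<in>{1..int N}. r' j l \<ge> \<delta>)
              \<longrightarrow> J_fun n N h dt b rk r w \<le> J_fun n N h dt b rk r' w'"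
      proof (intro allI impI)
        fix r' w' assume "feas n N h rk r' w' \<and> (\<forall>j\<in>{1..n}. \<forall>l\<in>{1..int N}. r' j l \<ge> \<delta>)"
        then have "(r', w') \<in> K_set n N h \<delta> rk" unfolding K_iff by blast
        then show "J_fun n N h dt b rk r w \<le> J_fun n N h dt b rk r' w'" using mn0 by blast
      qed
      have rgt: "\<forall>j\<in>{1..n}. \<forall>l\<in>{1..int N}. r j l > \<delta>"
      proof (rule ccontr)
        assume "\<not> ?thesis"
        then obtain i0 l0 where i0: "i0 \<in> {1..n}" and l0: "l0 \<in> {1..int N}" and le: "r i0 l0 \<le> \<delta>" by force
        define a where "a = r i0 l0"
        have aeq: "a = \<delta>" using le rge i0 l0 unfolding a_def by force
        have ad: "a \<le> d1" using aeq dd1 by simp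
        from improve[OF f rpos' i0 l0 a_def ad]
        have f2: "feas n N h rk (\<lambda>i l. (1 - a) * r i l + a * rk i l) (\<lambda>i l. (1 - a) * w i l)"
          and lt2: "J_fun n N h dt b rk (\<lambda>i l. (1 - a) * r i l + a * rk i l) (\<lambda>i l. (1 - a) * w i l) < J_fun n N h dt b rk r w"
          by auto
        have "\<forall>i\<in>{1..n}. \<forall>l\<in>{1..int N}. (1 - a) * r i l + a * rk i l \<ge> \<delta>"
        proof (intro ballI)
          fix i l assume i: "i \<in> {1..n}" and l: "l \<in> {1..int N}"
          have "r i l \<ge> \<delta>" using rge i l by auto
          moreover have "rk i l \<ge> \<delta>" using mle i l dd1 d1m mpos by force
          moreover have "a < 1" "a > 0" using ad d14 aeq d0 by auto
          ultimately have "(1 - a) * r i l \<ge> (1 - a) * \<delta>" "a * rk i l \<ge> a * \<delta>"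
            by (auto intro: mult_left_mono)
          then show "(1 - a) * r i l + a * rk i l \<ge> \<delta>" by (simp add: algebra_simps)
        qed
        with mn f2 lt2 show False by force
      qed
      have G: "\<And>i k e0. i \<in> {1..n} \<Longrightarrow> k \<in> {1..n} \<Longrightarrow>
          D_h h (\<lambda>m. ln (r i m)) e0 + 1 / dt * (\<Sum>j\<in>{1..n}. b i j * hat (rk j) e0 * (w i e0 - w j e0))
        = D_h h (\<lambda>m. ln (r k m)) e0 + 1 / dt * (\<Sum>j\<in>{1..n}. b k j * hat (rk j) e0 * (w k e0 - w j e0))"
      proof -
        fix i k e0 assume i: "i \<in> {1..n}" and k: "k \<in> {1..n}"
        show "D_h h (\<lambda>m. ln (r i m)) e0 + 1 / dt * (\<Sum>j\<in>{1..n}. b i j * hat (rk j) e0 * (w i e0 - w j e0))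
        = D_h h (\<lambda>m. ln (r k m)) e0 + 1 / dt * (\<Sum>j\<in>{1..n}. b k j * hat (rk j) e0 * (w k e0 - w j e0))"
        proof (cases "i = k")
          case True then show ?thesis by simp
        next
          case False
          show ?thesis by (rule first_order[OF h dt N1 bpos rkpos rkper f rgt d0 mn i k False])
        qed
      qed
      define v where "v = (\<lambda>i l. w i l / dt)"
      have wper: "\<forall>i\<in>{1..n}. periodic_grid N (w i)" using f unfolding feas_def by auto
      show "scheme_solution n N h dt b rk r"
        unfolding scheme_solution_def
      proof (rule exI[of _ v], intro conjI ballI allI)
        fix i assume i: "i \<in> {1..n}"
        show "periodic_grid N (v i)" unfolding v_def using wper i per_divide[of N "w i" "\<lambda>_. dt"]
          by (simp add: periodic_grid_def)
      next
        fix i l assume i: "i \<in> {1..n}"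
        have E0: "r i l - rk i l + d_h h (\<lambda>m. hat (rk i) m * w i m) l = 0"
        proof (rule per_zero[OF N1, where E = "\<lambda>l. r i l - rk i l + d_h h (\<lambda>m. hat (rk i) m * w i m) l"])
          show "periodic_grid N (\<lambda>l. r i l - rk i l + d_h h (\<lambda>m. hat (rk i) m * w i m) l)"
            using rper rkper wper i by (intro per_add per_diff per_d_h per_mult hat_per) auto
          show "\<forall>l\<in>{1..int N}. r i l - rk i l + d_h h (\<lambda>m. hat (rk i) m * w i m) l = 0"
            using f i unfolding feas_def by blast
        qed
        have "(\<lambda>m. hat (rk i) m * v i m) = (\<lambda>m. (1 / dt) * (hat (rk i) m * w i m))"
          unfolding v_def by (simp add: fun_eq_iff)
        have "d_h h (\<lambda>m. hat (rk i) m * v i m) l = (1 / dt) * d_h h (\<lambda>m. hat (rk i) m * w i m) l"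
          unfolding \<open>(\<lambda>m. hat (rk i) m * v i m) = (\<lambda>m. (1 / dt) * (hat (rk i) m * w i m))\<close> by (rule d_h_scale)
        then show "(r i l - rk i l) / dt + d_h h (\<lambda>m. hat (rk i) m * v i m) l = 0"
          using E0 dt by (simp add: field_simps)
        define S where "S = (\<Sum>j\<in>{1..n}. hat (rk j) l * D_h h (\<lambda>m. ln (r j m)) l)"
        let ?g = "\<lambda>q. D_h h (\<lambda>m. ln (r q m)) l + 1 / dt * (\<Sum>j\<in>{1..n}. b q j * hat (rk j) l * (w q l - w j l))"
        have "(\<Sum>q\<in>{1..n}. hat (rk q) l * ?g q) = S + 1 / dt * (\<Sum>q\<in>{1..n}. hat (rk q) l * (\<Sum>j\<in>{1..n}. b q j * hat (rk j) l * (w q l - w j l)))"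
          unfolding S_def by (simp add: distrib_left sum.distrib sum_distrib_left algebra_simps)
        also have "(\<Sum>q\<in>{1..n}. hat (rk q) l * (\<Sum>j\<in>{1..n}. b q j * hat (rk j) l * (w q l - w j l))) = 0"
          by (rule antisym_sum[OF sym])
        finally have s1: "(\<Sum>q\<in>{1..n}. hat (rk q) l * ?g q) = S" by simp
        have "(\<Sum>q\<in>{1..n}. hat (rk q) l * ?g q) = (\<Sum>q\<in>{1..n}. hat (rk q) l * ?g i)"
          by (rule sum.cong[OF refl]) (use G[OF _ i] in simp)
        also have "\<dots> = ?g i" using hatsum[of l] by (simp add: sum_distrib_right[symmetric])
        finally have gi: "?g i = S" using s1 by simp
        have "(\<Sum>j\<in>{1..n}. b i j * hat (rk j) l * (v i l - v j l)) = 1 / dt * (\<Sum>j\<in>{1..n}. b i j * hat (rk j) l * (w i l - w j l))"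
          unfolding v_def by (simp add: sum_distrib_left diff_divide_distrib algebra_simps)
        then show "- (\<Sum>j\<in>{1..n}. b i j * hat (rk j) l * (v i l - v j l))
           = D_h h (\<lambda>m. ln (r i m)) l
             - (1 / (\<Sum>j\<in>{1..n}. hat (rk j) l))
               * (\<Sum>j\<in>{1..n}. hat (rk j) l * D_h h (\<lambda>m. ln (r j m)) l)"
          using gi hatsum[of l] unfolding S_def by simp
      next
        fix l
        have E0: "(\<Sum>j\<in>{1..n}. hat (rk j) l * w j l) = 0"
        proof (rule per_zero[OF N1, where E = "\<lambda>l. \<Sum>j\<in>{1..n}. hat (rk j) l * w j l"])
          show "periodic_grid N (\<lambda>l. \<Sum>j\<in>{1..n}. hat (rk j) l * w j l)"
            using rkper wper by (intro per_sum per_mult hat_per) auto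
          show "\<forall>l\<in>{1..int N}. (\<Sum>j\<in>{1..n}. hat (rk j) l * w j l) = 0"
            using f unfolding feas_def by blast
        qed
        have "(\<Sum>j\<in>{1..n}. hat (rk j) l * v j l) = (\<Sum>j\<in>{1..n}. hat (rk j) l * w j l) / dt"
          unfolding v_def by (simp add: sum_divide_distrib)
        then show "(\<Sum>j\<in>{1..n}. hat (rk j) l * v j l) = 0" using E0 by simp
      qed
    qed
  qed
qed


end
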